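(* Let $n\ge 3$ be an integer and let $a_1,\dots,a_n$ be real numbers such that $2a_k\le a_{k-1}+a_{k+1}$ for $k=2,\dots,n-1$ and $0\le 2a_n\le a_{n-1}$. Then for all $x\in(0,\pi)$, $$L_n(x)=\sum_{j=1}^n a_j\sin(jx)-\sum_{j=1}^{n-2}a_{j+2}\sin(jx)\ge 0.$$ *)

theory Defs
  imports Complex_Main
begin

end

theory Submission
  imports Defs
begin

fun DD :: "real \<Rightarrow> nat \<Rightarrow> real" where
  "DD x 0 = 1/2"
| "DD x (Suc j) = DD x j + cos (real (Suc j) * x)"

fun KK :: "real \<Rightarrow> nat \<Rightarrow> real" where
  "KK x 0 = DD x 0"
| "KK x (Suc m) = KK x m + DD x (Suc m)"

fun CC :: "(nat \<Rightarrow> real) \<Rightarrow> real \<Rightarrow> nat \<Rightarrow> real" where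
  "CC c x 0 = c 0 / 2"
| "CC c x (Suc N) = CC c x N + c (Suc N) * cos (real (Suc N) * x)"

lemma cos_prod: "cos (real (Suc j) * x) * cos x = (cos (real (Suc (Suc j)) * x) + cos (real j * x)) / 2"
proof -
  have a: "real (Suc (Suc j)) * x = real (Suc j) * x + x" by (simp add: algebra_simps)
  have b: "real j * x = real (Suc j) * x - x" by (simp add: algebra_simps)
  show ?thesis unfolding a b cos_add cos_diff by simp
qed

lemma DD_id: "DD x j * (1 - cos x) = (cos (real j * x) - cos (real (Suc j) * x)) / 2"
proof (induction j)
  case 0 then show ?case by simp
next
  case (Suc j)
  have "DD x (Suc j) * (1 - cos x) = DD x j * (1 - cos x) + cos (real (Suc j) * x) - cos (real (Suc j) * x) * cos x"
    by (simp add: algebra_simps)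
  also have "\<dots> = (cos (real (Suc j) * x) - cos (real (Suc (Suc j)) * x)) / 2"
    unfolding Suc cos_prod by (simp add: field_simps)
  finally show ?case .
qed

lemma KK_id: "KK x m * (1 - cos x) = (1 - cos (real (Suc m) * x)) / 2"
proof (induction m)
  case 0 then show ?case using DD_id[of x 0] by simp
next
  case (Suc m)
  have "KK x (Suc m) * (1 - cos x) = KK x m * (1 - cos x) + DD x (Suc m) * (1 - cos x)"
    by (simp add: algebra_simps)
  then show ?case unfolding Suc DD_id by (simp add: field_simps)
qed

lemma KK_nonneg:
  assumes "0 < x" "x < pi"
  shows "KK x m \<ge> 0"
proof -
  have "cos x < 1"
    using assms cos_monotone_0_pi[of 0 x] by simp
  hence p: "1 - cos x > 0" by simp
  have "KK x m * (1 - cos x) \<ge> 0" unfolding KK_id by simp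
  then show ?thesis using p by (simp add: zero_le_mult_iff)
qed

lemma abel:
  "(\<Sum>m\<le>N. (c m - 2 * c (Suc m) + c (Suc (Suc m))) * KK x m)
   = CC c x N - c (Suc N) * DD x N - (c (Suc N) - c (Suc (Suc N))) * KK x N"
proof (induction N)
  case 0 then show ?case by (simp add: algebra_simps)
next
  case (Suc N)
  show ?case unfolding sum.atMost_Suc Suc by (simp add: algebra_simps)
qed

lemma CC_cong: "(\<And>k. k \<le> N \<Longrightarrow> c k = d k) \<Longrightarrow> CC c x N = CC d x N"
  by (induction N) auto

lemma L_id:
  "(\<Sum>j=1..m+2. a j * sin (real j * x)) - (\<Sum>j=1..m. a (j + 2) * sin (real j * x))
   = 2 * sin x * CC (\<lambda>k. a (k+1)) x (Suc m)"
proof (induction m)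
  case 0
  have "(\<Sum>j=1..2. a j * sin (real j * x)) = a 1 * sin x + a 2 * sin (2 * x)"
    by (simp add: numeral_2_eq_2)
  moreover have "sin (2 * x) = 2 * sin x * cos x" by (rule sin_double)
  ultimately show ?case by (simp add: algebra_simps)
next
  case (Suc m)
  have s1: "(\<Sum>j=1..Suc m+2. a j * sin (real j * x)) = (\<Sum>j=1..m+2. a j * sin (real j * x)) + a (m+3) * sin (real (m+3) * x)"
    by (simp add: numeral_3_eq_3)
  have s2: "(\<Sum>j=1..Suc m. a (j + 2) * sin (real j * x)) = (\<Sum>j=1..m. a (j + 2) * sin (real j * x)) + a (m+3) * sin (real (Suc m) * x)"
    by (simp add: numeral_3_eq_3)
  have a: "real (m+3) * x = real (m+2) * x + x" by (simp add: algebra_simps)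
  have b: "real (Suc m) * x = real (m+2) * x - x" by (simp add: algebra_simps)
  have t: "sin (real (m+3) * x) - sin (real (Suc m) * x) = 2 * sin x * cos (real (m+2) * x)"
    unfolding a b sin_add sin_diff by simp
  have e: "CC (\<lambda>k. a (k+1)) x (Suc (Suc m)) = CC (\<lambda>k. a (k+1)) x (Suc m) + a (m+3) * cos (real (m+2) * x)"
    by (simp add: numeral_3_eq_3 numeral_2_eq_2)
  have "(\<Sum>j=1..Suc m+2. a j * sin (real j * x)) - (\<Sum>j=1..Suc m. a (j + 2) * sin (real j * x))
      = 2 * sin x * CC (\<lambda>k. a (k+1)) x (Suc m) + a (m+3) * (sin (real (m+3) * x) - sin (real (Suc m) * x))"
    unfolding s1 s2 Suc[symmetric] by (simp add: algebra_simps)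
  also have "\<dots> = 2 * sin x * CC (\<lambda>k. a (k+1)) x (Suc (Suc m))"
    unfolding t e by (simp add: algebra_simps)
  finally show ?case .
qed

theorem lemma2p4:
  fixes n :: nat and a :: "nat \<Rightarrow> real" and x :: real
  assumes "n \<ge> 3"
    and "\<And>k. 2 \<le> k \<Longrightarrow> k \<le> n - 1 \<Longrightarrow> 2 * a k \<le> a (k - 1) + a (k + 1)"
    and "0 \<le> 2 * a n" and "2 * a n \<le> a (n - 1)"
    and "0 < x" and "x < pi"
  shows "(\<Sum>j=1..n. a j * sin (real j * x)) - (\<Sum>j=1..n-2. a (j + 2) * sin (real j * x)) \<ge> 0"
proof -
  obtain m where m: "n = m + 2" using assms(1) by (metis add.commute le_add_diff_inverse2 le_trans numeral_le_iff semiring_norm(68) semiring_norm(72) numeral_eq_Suc le_Suc_eq)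
  define c where "c k = (if k < n then a (k+1) else 0)" for k
  have CCeq: "CC (\<lambda>k. a (k+1)) x (Suc m) = CC c x (Suc m)"
    by (rule CC_cong) (simp add: c_def m)
  have ab: "CC c x (Suc m) = (\<Sum>j\<le>Suc m. (c j - 2 * c (Suc j) + c (Suc (Suc j))) * KK x j)"
    using abel[of c x "Suc m"] by (simp add: c_def m)
  have "(\<Sum>j\<le>Suc m. (c j - 2 * c (Suc j) + c (Suc (Suc j))) * KK x j) \<ge> 0"
  proof (rule sum_nonneg)
    fix j assume j: "j \<in> {..Suc m}"
    have "c j - 2 * c (Suc j) + c (Suc (Suc j)) \<ge> 0"
    proof (cases "j + 2 \<le> n - 1")
      case True
      have "2 * a (j+2) \<le> a (j+2-1) + a (j+2+1)" using assms(2)[of "j+2"] True by simp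
      then show ?thesis using True by (simp add: c_def m)
    next
      case False
      then have "j = m \<or> j = Suc m" using j m by auto
      then show ?thesis using assms(3,4) by (auto simp: c_def m)
    qed
    then show "(c j - 2 * c (Suc j) + c (Suc (Suc j))) * KK x j \<ge> 0"
      using KK_nonneg[OF assms(5,6)] by simp
  qed
  moreover have "sin x \<ge> 0" using assms(5,6) by (simp add: sin_ge_zero)
  ultimately show ?thesis
    using L_id[where a=a and m=m and x=x] CCeq ab m by simp
qed

end
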